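(* Let $q\ge5$ be an integer coprime to $6$, let $\chi$ be a real primitive Dirichlet character modulo $q$, and let $\boldsymbol a=(a_0,a_1,a_2,a_3)$ be a vector of positive integers whose radicals divide $q$. Then $\Xi_{\boldsymbol a}$ vanishes unless $a_0=a_1=a_2=a_3$, in which case $$\Xi_{\boldsymbol a}=\mu(q)\phi(q)\prod_{p\|q}\big(p+1-\#E_{3b^2}(\mathbb{F}_p)\big),$$ where $b$ is the inverse of $2$ modulo $q$.
   Context: $\Xi_{\boldsymbol a}:=\sum\chi(b_0)\chi(b_1)\chi(b_2)\chi(b_3)$, the sum over residues $b_0,\dots,b_3$ mod $q$ for which there exist integers $n,d$ with $a_j\mid n+jd$ and $(n+jd)/a_j\equiv b_j\pmod q$ for all $0\le j\le3$. For a prime $p$ and $\lambda\in\mathbb{F}_p$, $E_\lambda/\mathbb{F}_p$ is the curve $y^2=x(x-1)(x-\lambda)$ and $\#E_\lambda(\mathbb{F}_p)$ counts its $\mathbb{F}_p$-points including the point at infinity. $\mathrm{rad}(n)=\prod_{p|n}p$; $\mu$ is Möbius, $\phi$ Euler's totient. *)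

theory Defs
  imports "HOL-Number_Theory.Number_Theory" "HOL-Library.FuncSet" "HOL-Computational_Algebra.Squarefree"
begin

definition dirichlet_character :: "nat \<Rightarrow> (int \<Rightarrow> complex) \<Rightarrow> bool" where
  "dirichlet_character q \<chi> \<longleftrightarrow> q > 0 \<and>
     (\<forall>n. \<chi> (n + int q) = \<chi> n) \<and>
     (\<forall>m n. \<chi> (m * n) = \<chi> m * \<chi> n) \<and>
     \<chi> 1 = 1 \<and>
     (\<forall>n. \<chi> n = 0 \<longleftrightarrow> \<not> coprime n (int q))"

text \<open>Primitive: not induced by any character of smaller modulus d dividing q.\<close>
definition primitive_character :: "nat \<Rightarrow> (int \<Rightarrow> complex) \<Rightarrow> bool" where
  "primitive_character q \<chi> \<longleftrightarrow> dirichlet_character q \<chi> \<and>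
     (\<forall>d. d dvd q \<and> d < q \<longrightarrow>
        \<not> (\<forall>n. coprime n (int q) \<and> [n = 1] (mod int d) \<longrightarrow> \<chi> n = 1))"

definition real_character :: "(int \<Rightarrow> complex) \<Rightarrow> bool" where
  "real_character \<chi> \<longleftrightarrow> (\<forall>n. \<chi> n \<in> \<real>)"

definition rad :: "nat \<Rightarrow> nat" where
  "rad n = (\<Prod>p\<in>prime_factors n. p)"

definition moebius :: "nat \<Rightarrow> int" where
  "moebius n = (if n = 0 then 0 else if squarefree n then (-1) ^ card (prime_factors n) else 0)"

definition Xi :: "(int \<Rightarrow> complex) \<Rightarrow> nat \<Rightarrow> (nat \<Rightarrow> nat) \<Rightarrow> complex" where
  "Xi \<chi> q a = (\<Sum>b \<in> {b \<in> {0..<4::nat} \<rightarrow>\<^sub>E {0..<int q}.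
        \<exists>n d :: int. \<forall>j<4. int (a j) dvd n + int j * d \<and>
                     [(n + int j * d) div int (a j) = b j] (mod int q)}.
      \<Prod>j<4. \<chi> (b j))"

text \<open>\<open>#E_\<lambda>(F_p)\<close> for \<open>y^2 = x(x-1)(x-\<lambda>)\<close>, including the point at infinity.\<close>
definition num_points_E :: "nat \<Rightarrow> int \<Rightarrow> nat" where
  "num_points_E p lam = card {(x, y) \<in> {0..<int p} \<times> {0..<int p}.
        [y ^ 2 = x * (x - 1) * (x - lam)] (mod int p)} + 1"

end

theory Submission
  imports Defs
begin

lemma chi_periodic_k:
  assumes "dirichlet_character q \<chi>"
  shows "\<chi> (x + k * int q) = \<chi> x"
proof -
  have P: "\<And>n. \<chi> (n + int q) = \<chi> n" using assms unfolding dirichlet_character_def by blast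
  have pos: "\<chi> (x + int j * int q) = \<chi> x" for x j
  proof (induction j arbitrary: x)
    case 0 then show ?case by simp
  next
    case (Suc j)
    have "x + int (Suc j) * int q = (x + int j * int q) + int q" by (simp add: algebra_simps)
    then show ?case using P[of "x + int j * int q"] Suc by (simp add: add.assoc)
  qed
  show ?thesis
  proof (cases "k \<ge> 0")
    case True then show ?thesis using pos[of x "nat k"] by simp
  next
    case False
    have "\<chi> ((x + k * int q) + int (nat (-k)) * int q) = \<chi> (x + k * int q)" by (rule pos)
    moreover have "(x + k * int q) + int (nat (-k)) * int q = x" using False by (simp add: algebra_simps)
    ultimately show ?thesis by metis
  qed
qed

lemma chi_mod:
  assumes "dirichlet_character q \<chi>"
  shows "\<chi> (x mod int q) = \<chi> x"
proof -
  have "x = x mod int q + (x div int q) * int q" by simp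
  then show ?thesis using chi_periodic_k[OF assms, of "x mod int q" "x div int q"] by metis
qed

lemma chi_cong:
  assumes "dirichlet_character q \<chi>" "[x = y] (mod int q)"
  shows "\<chi> x = \<chi> y"
  using assms chi_mod[OF assms(1), of x] chi_mod[OF assms(1), of y] unfolding cong_def by metis

lemma chi_mult: "dirichlet_character q \<chi> \<Longrightarrow> \<chi> (m * n) = \<chi> m * \<chi> n"
  unfolding dirichlet_character_def by blast

lemma chi_one: "dirichlet_character q \<chi> \<Longrightarrow> \<chi> 1 = 1"
  unfolding dirichlet_character_def by blast

lemma chi_zero_iff: "dirichlet_character q \<chi> \<Longrightarrow> \<chi> n = 0 \<longleftrightarrow> \<not> coprime n (int q)"
  unfolding dirichlet_character_def by blast

lemma chi_pos: "dirichlet_character q \<chi> \<Longrightarrow> q > 0"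
  unfolding dirichlet_character_def by blast

lemma chi_power: "dirichlet_character q \<chi> \<Longrightarrow> \<chi> (x ^ k) = \<chi> x ^ k"
  by (induction k) (auto simp: chi_one chi_mult)

lemma real_pow_one:
  fixes z :: complex
  assumes "z \<in> \<real>" "z ^ k = 1" "k > 0"
  shows "z = 1 \<or> z = -1"
proof -
  obtain r where r: "z = of_real r" using assms(1) by (auto elim: Reals_cases)
  have "r ^ k = 1" using assms(2) r by (metis of_real_eq_1_iff of_real_power)
  then have "\<bar>r\<bar> ^ k = 1" by (metis power_abs abs_one)
  then have "\<bar>r\<bar> = 1" using assms(3) by (metis abs_ge_zero power_eq_imp_eq_base power_one zero_le_one)
  then show ?thesis using r by (auto simp: abs_if split: if_splits)
qed

lemma sum_affine_perm:
  fixes h :: "int \<Rightarrow> 'a::comm_monoid_add" and m :: int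
  assumes "m > 0" "\<And>x. h (x mod m) = h x" "coprime c m"
  shows "(\<Sum>k\<in>{0..<m}. h (b + c*k)) = (\<Sum>k\<in>{0..<m}. h k)"
proof -
  define g where "g k = (b + c*k) mod m" for k
  have inj: "inj_on g {0..<m}"
  proof
    fix x y assume xy: "x \<in> {0..<m}" "y \<in> {0..<m}" "g x = g y"
    then have "[b + c*x = b + c*y] (mod m)" unfolding g_def cong_def by simp
    then have "[c*x = c*y] (mod m)" by (simp add: cong_add_lcancel)
    then have "[x = y] (mod m)" using cong_mult_lcancel[OF assms(3)] by blast
    then show "x = y" using xy cong_less_imp_eq_int by auto
  qed
  have sub: "g ` {0..<m} \<subseteq> {0..<m}" unfolding g_def using assms(1) by auto
  have eq: "g ` {0..<m} = {0..<m}"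
    by (rule card_subset_eq) (use sub card_image[OF inj] in auto)
  have "(\<Sum>k\<in>{0..<m}. h k) = (\<Sum>k\<in>g ` {0..<m}. h k)" using eq by simp
  also have "\<dots> = (\<Sum>k\<in>{0..<m}. h (g k))" using sum.reindex[OF inj] by simp
  also have "\<dots> = (\<Sum>k\<in>{0..<m}. h (b + c*k))" unfolding g_def using assms(2) by simp
  finally show ?thesis by simp
qed

lemma prim_witness:
  assumes "primitive_character q \<chi>" "d dvd q" "d < q"
  shows "\<exists>n. coprime n (int q) \<and> [n = 1] (mod int d) \<and> \<chi> n \<noteq> 1"
  using assms unfolding primitive_character_def by blast

lemma line_sum_zero:
  assumes prim: "primitive_character q \<chi>" and p: "prime p" and qpm: "q = p * m"
  shows "(\<Sum>k\<in>{0..<int p}. \<chi> (b + k * int m)) = 0"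
proof -
  have dc: "dirichlet_character q \<chi>" using prim unfolding primitive_character_def by blast
  have qpos: "q > 0" using chi_pos[OF dc] .
  have mpos: "m > 0" using qpos qpm by (cases m) auto
  have "m < q" using qpm p mpos prime_gt_1_nat by auto
  then obtain c where c: "coprime c (int q)" "[c = 1] (mod int m)" "\<chi> c \<noteq> 1"
    using prim_witness[OF prim, of m] qpm by auto
  define h where "h k = \<chi> (b + k * int m)" for k
  have hper: "h (x mod int p) = h x" for x
  proof -
    have "[b + (x mod int p) * int m = b + x * int m] (mod int q)"
    proof -
      have "[(x mod int p) * int m = x * int m] (mod int p * int m)"
      proof -
        have "(x mod int p) * int m = (x * int m) mod (int p * int m)" by (simp add: mod_mult_mult2)
        then show ?thesis by (simp add: cong_def)
      qed
      then show ?thesis using qpm by (simp add: cong_add_lcancel)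
    qed
    then show ?thesis unfolding h_def using chi_cong[OF dc] by blast
  qed
  obtain t where t: "c * b = b + t * int m"
    using c(2) by (metis cong_iff_lin cong_scalar_right mult.commute mult_1 cong_sym)
  have cp: "coprime c (int p)" using c(1) qpm by simp
  have "\<chi> c * (\<Sum>k\<in>{0..<int p}. h k) = (\<Sum>k\<in>{0..<int p}. h (t + c * k))"
  proof -
    have "\<chi> c * h k = h (t + c*k)" for k
    proof -
      have "\<chi> c * h k = \<chi> (c * (b + k * int m))" unfolding h_def using chi_mult[OF dc] by simp
      also have "c * (b + k * int m) = b + (t + c*k) * int m" using t by (simp add: algebra_simps)
      finally show ?thesis unfolding h_def by simp
    qed
    then show ?thesis by (simp add: sum_distrib_left)
  qed
  also have "\<dots> = (\<Sum>k\<in>{0..<int p}. h k)"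
    by (rule sum_affine_perm) (use p prime_gt_0_nat hper cp in auto)
  finally have "(\<chi> c - 1) * (\<Sum>k\<in>{0..<int p}. h k) = 0" by (simp add: algebra_simps)
  then show ?thesis using c(3) unfolding h_def by simp
qed

lemma lift_pow:
  fixes x d :: int and p :: nat
  assumes "[x = 1] (mod d)" "int p dvd d"
  shows "[x ^ p = 1] (mod d * int p)"
proof -
  define S where "S = (\<Sum>i<p. x^i)"
  have "[S = (\<Sum>i<p. (1::int))] (mod d)" unfolding S_def
    by (rule cong_sum) (use assms(1) cong_pow in fastforce)
  then have "[S = int p] (mod d)" by simp
  then have "[S = int p] (mod int p)" using assms(2) cong_dvd_modulus by blast
  then have "int p dvd S" using cong_dvd_iff by (metis dvd_refl)
  moreover have "d dvd x - 1" using assms(1) by (simp add: cong_iff_dvd_diff)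
  ultimately have "d * int p dvd (x - 1) * S" by (simp add: mult_dvd_mono)
  then have "d * int p dvd x ^ p - 1" unfolding S_def by (simp add: power_diff_1_eq)
  then show ?thesis by (simp add: cong_iff_dvd_diff)
qed

lemma q_squarefree_aux:
  assumes prim: "primitive_character q \<chi>" and re: "real_character \<chi>"
    and odd: "odd q" and p: "prime p" and pq: "p^2 dvd q"
  shows False
proof -
  have dc: "dirichlet_character q \<chi>" using prim unfolding primitive_character_def by blast
  have qpos: "q > 0" using chi_pos[OF dc] .
  obtain d where d: "q = p * d" using pq by (metis dvd_mult_left power2_eq_square dvd_def)
  have dpos: "d > 0" using d qpos by (cases d) auto
  have pd: "p dvd d" using pq d p by (simp add: power2_eq_square prime_gt_0_nat)
  have "d < q" using d p dpos prime_gt_1_nat by auto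
  then obtain n where n: "coprime n (int q)" "[n = 1] (mod int d)" "\<chi> n \<noteq> 1"
    using prim_witness[OF prim, of d] d by auto
  have "[n ^ p = 1] (mod int d * int p)" by (rule lift_pow) (use n pd in auto)
  then have "[n ^ p = 1] (mod int q)" using d by (simp add: mult.commute)
  then have "\<chi> (n ^ p) = \<chi> 1" using chi_cong[OF dc] by blast
  then have "\<chi> n ^ p = 1" using chi_power[OF dc] chi_one[OF dc] by simp
  then have "\<chi> n = 1 \<or> \<chi> n = -1"
    using real_pow_one[of "\<chi> n" p] re p prime_gt_0_nat unfolding real_character_def by blast
  moreover have "odd p" using odd pq p by (metis dvd_power dvd_trans prime_gt_0_nat even_iff_mod_2_eq_zero
       primes_dvd_imp_eq two_is_prime_nat zero_less_numeral dvd_mult_right power2_eq_square)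
  ultimately show False using n(3) \<open>\<chi> n ^ p = 1\<close> by auto
qed

lemma Legendre_vals: "Legendre a p \<in> {-1, 0, 1}"
  unfolding Legendre_def by auto

lemma Legendre_mult:
  assumes "prime p" "2 < p"
  shows "Legendre (a * b) (int p) = Legendre a (int p) * Legendre b (int p)"
proof -
  have e1: "[Legendre (a*b) (int p) = (a*b) ^ ((p - 1) div 2)] (mod int p)"
    using euler_criterion[of p "a*b"] assms by simp
  have "[Legendre a (int p) * Legendre b (int p) = a ^ ((p - 1) div 2) * b ^ ((p - 1) div 2)] (mod int p)"
    using euler_criterion[of p a] euler_criterion[of p b] assms cong_mult by blast
  then have "[Legendre (a*b) (int p) = Legendre a (int p) * Legendre b (int p)] (mod int p)"
    using e1 by (metis cong_sym cong_trans power_mult_distrib)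
  then have "int p dvd Legendre (a*b) (int p) - Legendre a (int p) * Legendre b (int p)"
    by (simp add: cong_iff_dvd_diff)
  moreover have "\<bar>Legendre (a*b) (int p) - Legendre a (int p) * Legendre b (int p)\<bar> \<le> 2"
    using Legendre_vals[of "a*b" "int p"] Legendre_vals[of a "int p"] Legendre_vals[of b "int p"] by auto
  ultimately have "Legendre (a*b) (int p) - Legendre a (int p) * Legendre b (int p) = 0"
  proof -
    assume d: "int p dvd Legendre (a*b) (int p) - Legendre a (int p) * Legendre b (int p)"
      and b2: "\<bar>Legendre (a*b) (int p) - Legendre a (int p) * Legendre b (int p)\<bar> \<le> 2"
    show ?thesis
    proof (rule ccontr)
      assume nz: "Legendre (a*b) (int p) - Legendre a (int p) * Legendre b (int p) \<noteq> 0"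
      have "\<bar>int p\<bar> \<le> \<bar>Legendre (a*b) (int p) - Legendre a (int p) * Legendre b (int p)\<bar>"
        using dvd_imp_le_int[OF nz d] .
      then show False using b2 assms(2) by simp
    qed
  qed
  then show ?thesis by simp
qed

lemma card_sqrt:
  assumes p: "prime p" "2 < p"
  shows "int (card {y \<in> {0..<int p}. [y^2 = c] (mod int p)}) = 1 + Legendre c (int p)"
proof -
  have pr: "prime (int p)" using p by simp
  define S where "S = {y \<in> {0..<int p}. [y^2 = c] (mod int p)}"
  show ?thesis
  proof (cases "[c = 0] (mod int p)")
    case True
    have "S = {0}"
    proof
      show "S \<subseteq> {0}"
      proof
        fix y assume y: "y \<in> S"
        then have "[y^2 = 0] (mod int p)" using True unfolding S_def by (auto intro: cong_trans)
        then have "int p dvd y^2" by (simp add: cong_0_iff)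
        then have "int p dvd y" using pr prime_dvd_power by blast
        then show "y \<in> {0}" using y unfolding S_def
          by (auto simp: zdvd_not_zless) (metis zdvd_not_zless order.order_iff_strict)
      qed
      show "{0} \<subseteq> S" using True p prime_gt_0_nat unfolding S_def by (auto simp: cong_sym)
    qed
    then show ?thesis using True unfolding S_def Legendre_def by simp
  next
    case nz: False
    show ?thesis
    proof (cases "QuadRes (int p) c")
      case True
      then obtain y0 where y0: "[y0^2 = c] (mod int p)" unfolding QuadRes_def by blast
      define z where "z = y0 mod int p"
      have z: "[z^2 = c] (mod int p)" unfolding z_def using y0
        by (metis cong_def power_mod)
      have zr: "0 \<le> z" "z < int p" unfolding z_def using p prime_gt_0_nat by auto
      have z0: "z \<noteq> 0" using z nz by (auto simp: cong_sym)
      have "S = {z, int p - z}"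
      proof
        show "S \<subseteq> {z, int p - z}"
        proof
          fix y assume y: "y \<in> S"
          then have "[y^2 = z^2] (mod int p)" using z unfolding S_def by (auto intro: cong_trans cong_sym)
          then have "int p dvd (y - z) * (y + z)" by (simp add: cong_iff_dvd_diff power2_eq_square algebra_simps)
          then have "int p dvd y - z \<or> int p dvd y + z" using pr prime_dvd_mult_iff by blast
          then show "y \<in> {z, int p - z}"
          proof
            assume "int p dvd y - z"
            then have "[y = z] (mod int p)" by (simp add: cong_iff_dvd_diff)
            then show ?thesis using y zr unfolding S_def by (auto simp: cong_less_imp_eq_int)
          next
            assume a: "int p dvd y + z"
            have "y - (int p - z) = (y + z) - int p" by simp
            then have "int p dvd y - (int p - z)" using a by (metis dvd_diff dvd_refl)
            then have "[y = int p - z] (mod int p)" by (simp add: cong_iff_dvd_diff)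
            then show ?thesis using y zr z0 unfolding S_def by (auto simp: cong_less_imp_eq_int)
          qed
        qed
        have "[(int p - z)^2 = z^2] (mod int p)"
          by (simp add: cong_iff_dvd_diff power2_eq_square algebra_simps)
        then show "{z, int p - z} \<subseteq> S" unfolding S_def using z zr z0 by (auto intro: cong_trans)
      qed
      moreover have "z \<noteq> int p - z"
      proof
        assume "z = int p - z"
        then have "int p = 2 * z" by simp
        then have "even p" by presburger
        then show False using p prime_odd_nat by blast
      qed
      ultimately show ?thesis using True nz unfolding S_def Legendre_def by simp
    next
      case False
      have "S = {}" using False unfolding S_def QuadRes_def by auto
      then have "card S = 0" by simp
      then show ?thesis using False nz unfolding S_def Legendre_def by simp
    qed
  qed
qed

lemma num_points_formula:
  assumes p: "prime p" "2 < p"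
  shows "int (num_points_E p lam) = int p + 1 + (\<Sum>x\<in>{0..<int p}. Legendre (x*(x-1)*(x-lam)) (int p))"
proof -
  have eq: "{(x, y) \<in> {0..<int p} \<times> {0..<int p}. [y ^ 2 = x * (x - 1) * (x - lam)] (mod int p)}
      = (SIGMA x:{0..<int p}. {y \<in> {0..<int p}. [y ^ 2 = x * (x - 1) * (x - lam)] (mod int p)})"
    by auto
  have "int (card {(x, y) \<in> {0..<int p} \<times> {0..<int p}. [y ^ 2 = x * (x - 1) * (x - lam)] (mod int p)})
     = (\<Sum>x\<in>{0..<int p}. int (card {y \<in> {0..<int p}. [y ^ 2 = x * (x - 1) * (x - lam)] (mod int p)}))"
    unfolding eq by (subst card_SigmaI) (auto intro: finite_subset[of _ "{0..<int p}"])
  also have "\<dots> = (\<Sum>x\<in>{0..<int p}. 1 + Legendre (x*(x-1)*(x-lam)) (int p))"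
    using card_sqrt[OF p] by simp
  also have "\<dots> = int p + (\<Sum>x\<in>{0..<int p}. Legendre (x*(x-1)*(x-lam)) (int p))"
    by (simp add: sum.distrib)
  finally show ?thesis unfolding num_points_E_def by simp
qed

lemma Legendre_cong:
  assumes "[a = a'] (mod int p)"
  shows "Legendre a (int p) = Legendre a' (int p)"
proof -
  have "QuadRes (int p) a \<longleftrightarrow> QuadRes (int p) a'"
    unfolding QuadRes_def using assms by (meson cong_sym cong_trans)
  moreover have "[a = 0] (mod int p) \<longleftrightarrow> [a' = 0] (mod int p)"
    using assms by (meson cong_sym cong_trans)
  ultimately show ?thesis unfolding Legendre_def by simp
qed

lemma Legendre_square:
  assumes "prime p" "\<not> int p dvd s"
  shows "Legendre (s^2) (int p) = 1"
proof -
  have "\<not> int p dvd s^2" using assms by (simp add: prime_dvd_power_iff)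
  then show ?thesis unfolding Legendre_def QuadRes_def by (auto simp: cong_0_iff intro: cong_refl)
qed

lemma elliptic_local:
  assumes p: "prime p" "3 < p" and b: "[2 * b = 1] (mod int p)"
  shows "(\<Sum>t\<in>{0..<int p}. Legendre ((1+t)*(1+2*t)*(1+3*t)) (int p))
       = (\<Sum>x\<in>{0..<int p}. Legendre (x*(x-1)*(x-3*b^2)) (int p))"
proof -
  define h where "h x = Legendre (x*(x-1)*(x-3*b^2)) (int p)" for x
  have hper: "h (x mod int p) = h x" for x
    unfolding h_def by (rule Legendre_cong) (intro cong_mult cong_diff cong_refl, auto simp: cong_def)
  have cb: "coprime b (int p)" using b
    by (metis cong_dvd_iff cong_sym coprime_commute coprime_iff_gcd_eq_1 gcd_dvd1 gcd_dvd2 is_unit_gcd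
        dvd_mult2 dvd_trans one_dvd cong_imp_coprime coprime_1_left coprime_mult_left_iff)
  have c3: "coprime 3 (int p)"
  proof -
    have "\<not> int p dvd 3" using p by (auto dest!: zdvd_imp_le)
    then show ?thesis using p by (simp add: prime_imp_coprime_int coprime_commute)
  qed
  have c3b: "coprime (3*b) (int p)" using cb c3 by simp
  have "(\<Sum>x\<in>{0..<int p}. h x) = (\<Sum>t\<in>{0..<int p}. h (3*b + (3*b)*t))"
    by (rule sum_affine_perm[symmetric]) (use p prime_gt_0_nat hper c3b in auto)
  also have "\<dots> = (\<Sum>t\<in>{0..<int p}. Legendre ((1+t)*(1+2*t)*(1+3*t)) (int p))"
  proof (rule sum.cong[OF refl])
    fix t
    define x where "x = 3*b + (3*b)*t"
    have e1: "[x - 1 = b*(3*t+1)] (mod int p)"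
    proof -
      have eq: "x - 1 - b*(3*t+1) = 2*b - 1" unfolding x_def by (simp add: algebra_simps)
      have "int p dvd 2*b - 1" using b by (simp add: cong_iff_dvd_diff)
      then show ?thesis unfolding cong_iff_dvd_diff eq .
    qed
    have e2: "[x - 3*b^2 = 3*b^2*(2*t+1)] (mod int p)"
    proof -
      have eq: "x - 3*b^2 - 3*b^2*(2*t+1) = - (3*b*(1+t)) * (2*b - 1)" unfolding x_def
        by (simp add: algebra_simps power2_eq_square)
      have "int p dvd 2*b - 1" using b by (simp add: cong_iff_dvd_diff)
      then have "int p dvd - (3*b*(1+t)) * (2*b - 1)" by simp
      then show ?thesis unfolding cong_iff_dvd_diff eq .
    qed
    have "[x*(x-1)*(x-3*b^2) = (3*b*(t+1)) * (b*(3*t+1)) * (3*b^2*(2*t+1))] (mod int p)"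
      using e1 e2 unfolding x_def by (intro cong_mult) (auto simp: algebra_simps)
    moreover have "(3*b*(t+1)) * (b*(3*t+1)) * (3*b^2*(2*t+1)) = (3*b^2)^2 * ((1+t)*(1+2*t)*(1+3*t))"
      by (simp add: algebra_simps power2_eq_square)
    ultimately have "h x = Legendre ((3*b^2)^2 * ((1+t)*(1+2*t)*(1+3*t))) (int p)"
      unfolding h_def using Legendre_cong by metis
    also have "\<dots> = Legendre ((3*b^2)^2) (int p) * Legendre ((1+t)*(1+2*t)*(1+3*t)) (int p)"
      using Legendre_mult p by simp
    also have "Legendre ((3*b^2)^2) (int p) = 1"
    proof (rule Legendre_square[OF p(1)])
      have "coprime (3*b^2) (int p)" using cb c3 by simp
      then show "\<not> int p dvd 3*b^2" using p
        by (metis coprime_commute coprime_dvd_mult_right_iff dvd_refl not_prime_unit prime_nat_int_transfer mult_1_right)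
    qed
    finally show "h (3*b + (3*b)*t) = Legendre ((1+t)*(1+2*t)*(1+3*t)) (int p)" unfolding x_def by simp
  qed
  finally show ?thesis unfolding h_def by simp
qed

lemma fermat_int:
  assumes "prime p" "\<not> int p dvd x"
  shows "[x ^ (p - 1) = 1] (mod int p)"
proof -
  have "\<not> p dvd nat (x mod int p)"
  proof
    assume "p dvd nat (x mod int p)"
    then have "int p dvd x mod int p" using assms(1) prime_gt_0_nat
      by (metis int_dvd_int_iff nat_0_le pos_mod_sign of_nat_0_less_iff)
    then show False using assms(2) by (simp add: dvd_mod_iff)
  qed
  then have "[nat (x mod int p) ^ (p - 1) = 1] (mod p)" using fermat_theorem assms(1) by blast
  then have "[int (nat (x mod int p)) ^ (p - 1) = 1] (mod int p)"
    by (metis cong_int_iff of_nat_1 of_nat_power)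
  then have "[(x mod int p) ^ (p - 1) = 1] (mod int p)" using assms(1) prime_gt_0_nat by simp
  then show ?thesis by (metis cong_def power_mod)
qed

locale pchar =
  fixes p :: nat and \<psi> :: "int \<Rightarrow> complex"
  assumes p: "prime p" "2 < p"
    and cong: "\<And>x y. [x = y] (mod int p) \<Longrightarrow> \<psi> x = \<psi> y"
    and mult: "\<And>x y. \<psi> (x * y) = \<psi> x * \<psi> y"
    and one: "\<psi> 1 = 1"
    and zero: "\<And>x. \<psi> x = 0 \<longleftrightarrow> int p dvd x"
    and re: "\<And>x. \<psi> x \<in> \<real>"
    and nonpr: "\<exists>c. \<psi> c \<noteq> 1 \<and> \<not> int p dvd c"
begin

lemma pow: "\<psi> (x ^ k) = \<psi> x ^ k"
  by (induction k) (auto simp: one mult)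

lemma unit: assumes "\<not> int p dvd x" shows "\<psi> x = 1 \<or> \<psi> x = -1"
proof -
  have "\<psi> x ^ (p - 1) = 1" using fermat_int[OF p(1) assms] cong one pow by metis
  then show ?thesis using real_pow_one[of "\<psi> x" "p - 1"] re p by auto
qed

lemma qr: assumes "\<not> int p dvd x" "QuadRes (int p) x" shows "\<psi> x = 1"
proof -
  obtain y where y: "[y^2 = x] (mod int p)" using assms(2) unfolding QuadRes_def by blast
  have "\<not> int p dvd y"
  proof
    assume "int p dvd y"
    then have "int p dvd y^2" by (simp add: power2_eq_square)
    then show False using y assms(1) cong_dvd_iff by blast
  qed
  then have "\<psi> y = 1 \<or> \<psi> y = -1" by (rule unit)
  then have "\<psi> (y^2) = 1" using pow by auto
  then show ?thesis using cong[OF y] by simp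
qed

lemma is_Legendre: "\<psi> x = of_int (Legendre x (int p))"
proof (cases "int p dvd x")
  case True
  then show ?thesis using zero unfolding Legendre_def by (simp add: cong_0_iff)
next
  case nx: False
  show ?thesis
  proof (cases "QuadRes (int p) x")
    case True
    then show ?thesis using qr[OF nx] nx unfolding Legendre_def by (simp add: cong_0_iff)
  next
    case nq: False
    have L: "Legendre x (int p) = -1" using nx nq unfolding Legendre_def by (simp add: cong_0_iff)
    have "\<psi> x = -1"
    proof (rule ccontr)
      assume "\<psi> x \<noteq> -1"
      then have px: "\<psi> x = 1" using unit[OF nx] by blast
      obtain c where c: "\<psi> c \<noteq> 1" "\<not> int p dvd c" using nonpr by blast
      have cq: "\<not> QuadRes (int p) c" using qr c by blast
      have Lc: "Legendre c (int p) = -1" using c cq unfolding Legendre_def by (simp add: cong_0_iff)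
      have "prime (int p)" using p(1) by simp
      have cop: "coprime x (int p)" using prime_imp_coprime[OF \<open>prime (int p)\<close> nx]
        by (metis coprime_commute)
      obtain x' where x': "[x * x' = gcd x (int p)] (mod int p)" using cong_solve_int by blast
      then have x'1: "[x * x' = 1] (mod int p)" using cop by simp
      have "Legendre x (int p) * Legendre x' (int p) = Legendre 1 (int p)"
        using Legendre_mult[OF p, of x x'] Legendre_cong[OF x'1] by simp
      moreover have "Legendre 1 (int p) = 1"
        using Legendre_square[OF p(1), of 1] p by simp
      ultimately have Lx': "Legendre x' (int p) = -1" using L by simp
      define r where "r = c * x'"
      have Lr: "Legendre r (int p) = 1" unfolding r_def using Legendre_mult[OF p, of c x'] Lc Lx' by simp
      then have "\<not> int p dvd r" "QuadRes (int p) r"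
        unfolding Legendre_def by (auto simp: cong_0_iff split: if_splits)
      then have pr: "\<psi> r = 1" by (rule qr)
      have "[x * r = c] (mod int p)"
      proof -
        have "x * r = c * (x * x')" unfolding r_def by (simp add: algebra_simps)
        moreover have "[c * (x * x') = c * 1] (mod int p)" using x'1 by (intro cong_mult cong_refl)
        ultimately show ?thesis by (metis mult_1_right)
      qed
      then have "\<psi> c = \<psi> x * \<psi> r" using cong mult by metis
      then show False using px pr c by simp
    qed
    then show ?thesis using L by simp
  qed
qed

end

lemma sqfree_prod:
  fixes q :: nat
  assumes "q > 0" "\<forall>p. prime p \<longrightarrow> \<not> p^2 dvd q"
  shows "q = (\<Prod>p\<in>prime_factors q. p)"
proof -
  have "q = (\<Prod>p\<in>prime_factors q. p ^ multiplicity p q)" by (rule prime_factorization_nat[OF assms(1)])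
  also have "\<dots> = (\<Prod>p\<in>prime_factors q. p)"
  proof (rule prod.cong[OF refl])
    fix p assume p: "p \<in> prime_factors q"
    then have pp: "prime p" "p dvd q" by auto
    have "multiplicity p q \<ge> 1" using pp assms(1) multiplicity_geI[of q p 1] prime_gt_1_nat[OF pp(1)] by auto
    moreover have "multiplicity p q < 2"
      using pp assms multiplicity_lessI[of q p 2] prime_gt_1_nat[OF pp(1)] by auto
    ultimately have "multiplicity p q = 1" by linarith
    then show "p ^ multiplicity p q = p" by simp
  qed
  finally show ?thesis .
qed

lemma cong_all_primes:
  assumes "q > 0" "\<forall>p. prime p \<longrightarrow> \<not> p^2 dvd q" "\<forall>p\<in>prime_factors q. [u = v] (mod int p)"
  shows "[u = v] (mod int q)"
proof -
  have "[u = v] (mod (\<Prod>p\<in>prime_factors q. int p))"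
    by (rule cong_cong_prod_coprime) (use assms(3) in \<open>auto intro: primes_coprime\<close>)
  moreover have "(\<Prod>p\<in>prime_factors q. int p) = int q"
  proof -
    have "int q = int (\<Prod>p\<in>prime_factors q. p)" using sqfree_prod[OF assms(1,2)] by (rule arg_cong)
    also have "\<dots> = (\<Prod>p\<in>prime_factors q. int p)" by (rule of_nat_prod)
    finally show ?thesis by simp
  qed
  ultimately show ?thesis by simp
qed

lemma chi_prod:
  assumes "dirichlet_character q \<chi>"
  shows "\<chi> (\<Prod>i\<in>A. f i) = (\<Prod>i\<in>A. \<chi> (f i))"
proof (induction A rule: infinite_finite_induct)
  case (infinite A) then show ?case using chi_one[OF assms] by simp
next
  case empty then show ?case using chi_one[OF assms] by simp
next
  case (insert x F) then show ?case using chi_mult[OF assms] by simp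
qed

definition crt1 :: "nat \<Rightarrow> nat \<Rightarrow> int \<Rightarrow> int" where
  "crt1 q p x = 1 + int (q div p) * (SOME s. [int (q div p) * s = 1] (mod int p)) * (x - 1)"

lemma crt1_props:
  assumes "coprime p (q div p)"
  shows "[crt1 q p x = x] (mod int p)" "[crt1 q p x = 1] (mod int (q div p))"
proof -
  define m where "m = int (q div p)"
  have "coprime m (int p)" using assms unfolding m_def by (simp add: coprime_commute)
  then have "\<exists>s. [m * s = 1] (mod int p)" using cong_solve_int[of m "int p"] by (simp add: gcd.commute coprime_iff_gcd_eq_1)
  then have s: "[m * (SOME s. [m * s = 1] (mod int p)) = 1] (mod int p)" by (rule someI_ex)
  define s where "s = (SOME s. [m * s = 1] (mod int p))"
  have c: "crt1 q p x = 1 + m * s * (x - 1)" unfolding crt1_def m_def s_def by simp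
  have "[1 + m * s * (x - 1) = 1 + 1 * (x - 1)] (mod int p)"
    using s unfolding s_def by (intro cong_add cong_mult cong_refl) auto
  then show "[crt1 q p x = x] (mod int p)" using c by simp
  have "[1 + m * s * (x - 1) = 1 + 0] (mod m)"
    by (intro cong_add cong_refl) (simp add: cong_0_iff)
  then show "[crt1 q p x = 1] (mod int (q div p))" using c m_def by simp
qed

context
  fixes q :: nat and \<chi> :: "int \<Rightarrow> complex"
  assumes prim: "primitive_character q \<chi>" and re: "real_character \<chi>"
    and sqf: "\<forall>p. prime p \<longrightarrow> \<not> p^2 dvd q" and oddq: "odd q"
begin

lemma dc: "dirichlet_character q \<chi>" using prim unfolding primitive_character_def by blast

lemma qpos: "q > 0" using chi_pos[OF dc] .

lemma cop_pm: assumes "p \<in> prime_factors q" shows "coprime p (q div p)"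
proof -
  have pp: "prime p" "p dvd q" using assms by auto
  have "\<not> p dvd q div p"
  proof
    assume "p dvd q div p"
    then have "p * p dvd p * (q div p)" by simp
    then have "p^2 dvd q" using pp by (simp add: power2_eq_square)
    then show False using sqf pp by blast
  qed
  then show ?thesis using pp prime_imp_coprime by blast
qed

lemma qdecomp: assumes "p \<in> prime_factors q" shows "q = p * (q div p)"
  using assms by auto

lemma crt_q:
  assumes "p \<in> prime_factors q" "[u = v] (mod int p)" "[u = v] (mod int (q div p))"
  shows "[u = v] (mod int q)"
proof -
  have "[u = v] (mod int p * int (q div p))"
    using coprime_cong_mult[OF assms(2,3)] cop_pm[OF assms(1)] by simp
  then show ?thesis using qdecomp[OF assms(1)] by (metis of_nat_mult)
qed

lemma local_pchar:
  assumes P: "p \<in> prime_factors q"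
  shows "pchar p (\<lambda>x. \<chi> (crt1 q p x))"
proof -
  have pp: "prime p" "p dvd q" using P by auto
  have p2: "2 < p" using pp oddq prime_ge_2_nat
    by (metis dvd_trans even_numeral le_neq_implies_less primes_dvd_imp_eq two_is_prime_nat) 
  note cp = crt1_props[OF cop_pm[OF P]]
  show ?thesis
  proof
    show "prime p" "2 < p" by fact+
    show "\<chi> (crt1 q p x) = \<chi> (crt1 q p y)" if "[x = y] (mod int p)" for x y
    proof -
      have "[crt1 q p x = crt1 q p y] (mod int q)"
        by (rule crt_q[OF P]) (use cp that in \<open>meson cong_sym cong_trans\<close>)+
      then show ?thesis using chi_cong[OF dc] by blast
    qed
    show "\<chi> (crt1 q p (x * y)) = \<chi> (crt1 q p x) * \<chi> (crt1 q p y)" for x y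
    proof -
      have "[crt1 q p (x*y) = crt1 q p x * crt1 q p y] (mod int q)"
      proof (rule crt_q[OF P])
        show "[crt1 q p (x*y) = crt1 q p x * crt1 q p y] (mod int p)"
          using cp(1)[of "x*y"] cong_mult[OF cp(1)[of x] cp(1)[of y]] by (meson cong_sym cong_trans)
        show "[crt1 q p (x*y) = crt1 q p x * crt1 q p y] (mod int (q div p))"
          using cp(2)[of "x*y"] cong_mult[OF cp(2)[of x] cp(2)[of y]] by (metis cong_sym cong_trans mult_1_right)
      qed
      then show ?thesis using chi_cong[OF dc] chi_mult[OF dc] by metis
    qed
    show "\<chi> (crt1 q p 1) = 1" unfolding crt1_def using chi_one[OF dc] by simp
    show "\<chi> (crt1 q p x) = 0 \<longleftrightarrow> int p dvd x" for x
    proof -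
      have c1: "coprime (crt1 q p x) (int (q div p))"
        using cp(2)[of x] by (metis coprime_1_left coprime_cong_cong_left cong_sym)
      have "coprime (crt1 q p x) (int q) \<longleftrightarrow> coprime (crt1 q p x) (int p)"
        using c1 qdecomp[OF P] by (metis coprime_mult_right_iff of_nat_mult)
      also have "\<dots> \<longleftrightarrow> coprime x (int p)" using coprime_cong_cong_left[OF cp(1)[of x]] .
      also have "\<dots> \<longleftrightarrow> \<not> int p dvd x"
      proof -
        have "prime (int p)" using pp by simp
        then show ?thesis by (metis coprime_commute prime_imp_coprime coprime_absorb_left not_prime_unit)
      qed
      finally show ?thesis using chi_zero_iff[OF dc] by blast
    qed
    show "\<chi> (crt1 q p x) \<in> \<real>" for x using re unfolding real_character_def by blast
    show "\<exists>c. \<chi> (crt1 q p c) \<noteq> 1 \<and> \<not> int p dvd c"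
    proof -
      have "q div p < q" using pp qpos prime_gt_1_nat by (simp add: div_less_dividend)
      moreover have "q div p dvd q" using pp(2) by (metis dvd_mult_div_cancel dvd_triv_right)
      ultimately obtain n where n: "coprime n (int q)" "[n = 1] (mod int (q div p))" "\<chi> n \<noteq> 1"
        using prim_witness[OF prim, of "q div p"] by auto
      have "[crt1 q p n = n] (mod int q)"
        by (rule crt_q[OF P]) (use cp n in \<open>meson cong_sym cong_trans\<close>)+
      then have "\<chi> (crt1 q p n) = \<chi> n" using chi_cong[OF dc] by blast
      moreover have "\<not> int p dvd n"
      proof
        assume "int p dvd n"
        moreover have "int p dvd int q" using pp by simp
        ultimately have "int p dvd gcd n (int q)" by simp
        then have "int p dvd 1" using n(1) by (metis coprime_iff_gcd_eq_1)
        then show False using pp(1) by (metis of_nat_1 int_dvd_int_iff nat_dvd_1_iff_1 not_prime_1)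
      qed
      ultimately show ?thesis using n(3) by metis
    qed
  qed
qed

lemma chi_decomp: "\<chi> x = (\<Prod>p\<in>prime_factors q. of_int (Legendre x (int p)))"
proof -
  have "[x = (\<Prod>p\<in>prime_factors q. crt1 q p x)] (mod int q)"
  proof (rule cong_all_primes[OF qpos sqf], intro ballI)
    fix r assume r: "r \<in> prime_factors q"
    have "(\<Prod>p\<in>prime_factors q. crt1 q p x) = crt1 q r x * (\<Prod>p\<in>prime_factors q - {r}. crt1 q p x)"
      using r by (simp add: prod.remove)
    moreover have "[(\<Prod>p\<in>prime_factors q - {r}. crt1 q p x) = (\<Prod>p\<in>prime_factors q - {r}. 1)] (mod int r)"
    proof (rule cong_prod)
      fix p assume p: "p \<in> prime_factors q - {r}"
      have "r dvd q div p"
      proof -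
        have "r dvd q" using r by auto
        then have "r dvd p * (q div p)" using qdecomp[of p] p by auto
        moreover have "\<not> r dvd p" using r p primes_dvd_imp_eq[of r p] by auto
        moreover have "prime r" using r by auto
        ultimately show ?thesis using prime_dvd_mult_iff by blast
      qed
      then show "[crt1 q p x = 1] (mod int r)"
        using crt1_props(2)[OF cop_pm, of p x] p by (auto intro: cong_dvd_modulus)
    qed
    ultimately have "[(\<Prod>p\<in>prime_factors q. crt1 q p x) = x * 1] (mod int r)"
      using crt1_props(1)[OF cop_pm[OF r], of x] cong_mult by (metis prod.neutral_const)
    then show "[x = (\<Prod>p\<in>prime_factors q. crt1 q p x)] (mod int r)" by (simp add: cong_sym)
  qed
  then have "\<chi> x = \<chi> (\<Prod>p\<in>prime_factors q. crt1 q p x)" using chi_cong[OF dc] by blast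
  also have "\<dots> = (\<Prod>p\<in>prime_factors q. \<chi> (crt1 q p x))"
    using chi_prod[OF dc] by blast
  also have "\<dots> = (\<Prod>p\<in>prime_factors q. of_int (Legendre x (int p)))"
    using pchar.is_Legendre[OF local_pchar] by simp
  finally show ?thesis .
qed

end

lemma sum_split_mult:
  fixes m1 m2 :: int and F :: "int \<Rightarrow> 'a::comm_monoid_add"
  assumes "m1 > 0" "m2 > 0"
  shows "(\<Sum>t\<in>{0..<m1*m2}. F t) = (\<Sum>x\<in>{0..<m1}. \<Sum>y\<in>{0..<m2}. F (x + m1*y))"
proof -
  have bij: "bij_betw (\<lambda>(x,y). x + m1*y) ({0..<m1}\<times>{0..<m2}) {0..<m1*m2}"
  proof (rule bij_betw_byWitness[where f' = "\<lambda>t. (t mod m1, t div m1)"])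
    show "\<forall>a\<in>{0..<m1} \<times> {0..<m2}. (\<lambda>t. (t mod m1, t div m1)) ((\<lambda>(x, y). x + m1 * y) a) = a"
      using assms by auto
    show "\<forall>a'\<in>{0..<m1 * m2}. (\<lambda>(x, y). x + m1 * y) (a' mod m1, a' div m1) = a'"
      by simp
    show "(\<lambda>(x, y). x + m1 * y) ` ({0..<m1} \<times> {0..<m2}) \<subseteq> {0..<m1 * m2}"
    proof
      fix t assume "t \<in> (\<lambda>(x, y). x + m1 * y) ` ({0..<m1} \<times> {0..<m2})"
      then obtain x y where xy: "t = x + m1*y" "0 \<le> x" "x < m1" "0 \<le> y" "y < m2" by auto
      have "m1 * y \<le> m1 * (m2 - 1)" using xy assms by (intro mult_left_mono) auto
      then have "t < m1 * m2" using xy by (simp add: algebra_simps)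
      then show "t \<in> {0..<m1*m2}" using xy assms by auto
    qed
    show "(\<lambda>t. (t mod m1, t div m1)) ` {0..<m1 * m2} \<subseteq> {0..<m1} \<times> {0..<m2}"
    proof
      fix z assume "z \<in> (\<lambda>t. (t mod m1, t div m1)) ` {0..<m1 * m2}"
      then obtain t where t: "z = (t mod m1, t div m1)" "0 \<le> t" "t < m1 * m2" by auto
      have "t div m1 < m2"
      proof (rule ccontr)
        assume "\<not> t div m1 < m2"
        then have "m1 * m2 \<le> m1 * (t div m1)" using assms by (intro mult_left_mono) auto
        moreover have "m1 * (t div m1) \<le> t" using assms t
          by (metis add.commute le_add_same_cancel2 minus_mod_eq_mult_div mult_div_mod_eq pos_mod_sign)
        ultimately show False using t by simp
      qed
      then show "z \<in> {0..<m1} \<times> {0..<m2}" using t assms by (auto simp: pos_imp_zdiv_nonneg_iff)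
    qed
  qed
  have "(\<Sum>t\<in>{0..<m1*m2}. F t) = (\<Sum>z\<in>{0..<m1}\<times>{0..<m2}. F ((\<lambda>(x,y). x + m1*y) z))"
    using sum.reindex_bij_betw[OF bij, of F] by simp
  also have "\<dots> = (\<Sum>x\<in>{0..<m1}. \<Sum>y\<in>{0..<m2}. F (x + m1*y))"
    by (simp add: sum.cartesian_product) (rule sum.cong, auto split: prod.splits)
  finally show ?thesis .
qed

lemma sum_two_crt:
  fixes m1 m2 :: int and g G :: "int \<Rightarrow> 'a::comm_semiring_1"
  assumes "m1 > 0" "m2 > 0" "coprime m1 m2"
    and "\<And>x. g (x mod m1) = g x" "\<And>x. G (x mod m2) = G x"
  shows "(\<Sum>t\<in>{0..<m1*m2}. g t * G t) = (\<Sum>t\<in>{0..<m1}. g t) * (\<Sum>t\<in>{0..<m2}. G t)"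
proof -
  have "(\<Sum>t\<in>{0..<m1*m2}. g t * G t) = (\<Sum>x\<in>{0..<m1}. \<Sum>y\<in>{0..<m2}. g (x + m1*y) * G (x + m1*y))"
    by (rule sum_split_mult) (use assms in auto)
  also have "\<dots> = (\<Sum>x\<in>{0..<m1}. g x * (\<Sum>y\<in>{0..<m2}. G (x + m1*y)))"
  proof (rule sum.cong[OF refl])
    fix x
    have "g (x + m1*y) = g x" for y using assms(4)[of "x + m1*y"] assms(4)[of x] by simp
    then show "(\<Sum>y\<in>{0..<m2}. g (x + m1*y) * G (x + m1*y)) = g x * (\<Sum>y\<in>{0..<m2}. G (x + m1*y))"
      by (simp add: sum_distrib_left)
  qed
  also have "\<dots> = (\<Sum>x\<in>{0..<m1}. g x * (\<Sum>y\<in>{0..<m2}. G y))"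
    by (subst sum_affine_perm) (use assms in auto)
  also have "\<dots> = (\<Sum>t\<in>{0..<m1}. g t) * (\<Sum>t\<in>{0..<m2}. G t)"
    by (simp add: sum_distrib_right)
  finally show ?thesis .
qed

lemma sum_prod_crt:
  fixes g :: "nat \<Rightarrow> int \<Rightarrow> 'a::comm_semiring_1"
  assumes "finite P" "\<forall>p\<in>P. prime p" "\<And>p x. p \<in> P \<Longrightarrow> g p (x mod int p) = g p x"
  shows "(\<Sum>t\<in>{0..<int (\<Prod>P)}. \<Prod>p\<in>P. g p t) = (\<Prod>p\<in>P. \<Sum>t\<in>{0..<int p}. g p t)"
  using assms
proof (induction P rule: finite_induct)
  case empty
  then show ?case by simp
next
  case (insert p P)
  have pp: "prime p" using insert by auto
  have Ppos: "\<Prod>P > 0" using insert by (auto simp: prime_gt_0_nat)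
  have cop: "coprime (int p) (int (\<Prod>P))"
  proof -
    have "\<not> p dvd \<Prod>P"
    proof
      assume "p dvd \<Prod>P"
      then obtain p' where "p' \<in> P" "p dvd p'" using pp prime_dvd_prod_iff[OF insert(1) pp, of id] by auto
      then show False using insert primes_dvd_imp_eq[of p p'] by auto
    qed
    then have "coprime p (\<Prod>P)" using pp prime_imp_coprime by blast
    then show ?thesis by (metis coprime_int_iff)
  qed
  have Gper: "(\<Prod>p'\<in>P. g p' (x mod int (\<Prod>P))) = (\<Prod>p'\<in>P. g p' x)" for x
  proof (rule prod.cong[OF refl])
    fix p' assume p': "p' \<in> P"
    have "p' dvd \<Prod>P" using dvd_prodI[OF insert(1) p', of "\<lambda>x. x"] by simp
    then have "int p' dvd int (\<Prod>P)" by (simp only: int_dvd_int_iff)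
    then have eq: "(x mod int (\<Prod>P)) mod int p' = x mod int p'" by (rule mod_mod_cancel)
    have h: "g p' (y mod int p') = g p' y" for y using insert.prems(2) p' by blast
    have "g p' (x mod int (\<Prod>P)) = g p' ((x mod int (\<Prod>P)) mod int p')" using h by simp
    also have "\<dots> = g p' (x mod int p')" using eq by simp
    also have "\<dots> = g p' x" using h by simp
    finally show "g p' (x mod int (\<Prod>P)) = g p' x" .
  qed
  have "(\<Sum>t\<in>{0..<int (\<Prod>(insert p P))}. \<Prod>p\<in>insert p P. g p t)
      = (\<Sum>t\<in>{0..<int p * int (\<Prod>P)}. g p t * (\<Prod>p\<in>P. g p t))"
    using insert by simp
  also have "\<dots> = (\<Sum>t\<in>{0..<int p}. g p t) * (\<Sum>t\<in>{0..<int (\<Prod>P)}. \<Prod>p\<in>P. g p t)"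
  proof (rule sum_two_crt)
    show "0 < int (\<Prod>P)" using Ppos by linarith
  qed (use pp prime_gt_0_nat cop insert Gper in auto)
  also have "\<dots> = (\<Prod>p\<in>insert p P. \<Sum>t\<in>{0..<int p}. g p t)"
    using insert by simp
  finally show ?case .
qed

definition Tset :: "nat \<Rightarrow> (nat \<Rightarrow> nat) \<Rightarrow> (nat \<Rightarrow> int) set" where
  "Tset q a = {b \<in> {0..<4::nat} \<rightarrow>\<^sub>E {0..<int q}.
        \<exists>n d :: int. \<forall>j<4. int (a j) dvd n + int j * d \<and>
                     [(n + int j * d) div int (a j) = b j] (mod int q)}"

lemma Xi_T: "Xi \<chi> q a = (\<Sum>b\<in>Tset q a. \<Prod>j<4. \<chi> (b j))"
  unfolding Xi_def Tset_def by simp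

lemma finite_T: "finite (Tset q a)"
proof -
  have "Tset q a \<subseteq> {0..<4::nat} \<rightarrow>\<^sub>E {0..<int q}" unfolding Tset_def by auto
  moreover have "finite ({0..<4::nat} \<rightarrow>\<^sub>E {0..<int q})" by (intro finite_PiE) auto
  ultimately show ?thesis by (rule finite_subset)
qed

lemma Xi_equal:
  assumes dc: "dirichlet_character q \<chi>" and a: "\<forall>j<4. a j = a0" "a0 > 0"
  shows "Xi \<chi> q a = (\<Sum>n\<in>{0..<int q}. \<Sum>d\<in>{0..<int q}. \<Prod>j<4. \<chi> (n + int j * d))"
proof -
  have qpos: "q > 0" using chi_pos[OF dc] .
  define g where "g = (\<lambda>(n::int, d::int). restrict (\<lambda>j. (n + int j * d) mod int q) {0..<4::nat})"
  have T: "Tset q a = g ` ({0..<int q} \<times> {0..<int q})"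
  proof
    show "Tset q a \<subseteq> g ` ({0..<int q} \<times> {0..<int q})"
    proof
      fix b assume b: "b \<in> Tset q a"
      then obtain n d where nd: "\<forall>j<4. int (a j) dvd n + int j * d \<and>
                     [(n + int j * d) div int (a j) = b j] (mod int q)"
        and bP: "b \<in> {0..<4::nat} \<rightarrow>\<^sub>E {0..<int q}" unfolding Tset_def by blast
      have nd': "\<forall>j<4. int a0 dvd n + int j * d \<and> [(n + int j * d) div int a0 = b j] (mod int q)"
        using nd a by auto
      have "int a0 dvd n" using nd'[rule_format, of 0] by simp
      moreover have "int a0 dvd n + d" using nd'[rule_format, of 1] by simp
      ultimately have "int a0 dvd d" by (metis add_diff_cancel_left' dvd_diff)
      then obtain d' where d': "d = int a0 * d'" by blast
      obtain n' where n': "n = int a0 * n'" using \<open>int a0 dvd n\<close> by blast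
      have "b = g (n' mod int q, d' mod int q)"
      proof (rule ext)
        fix j
        show "b j = g (n' mod int q, d' mod int q) j"
        proof (cases "j < 4")
          case True
          have "(n + int j * d) div int a0 = n' + int j * d'"
            using a(2) n' d' by (simp add: algebra_simps)
          then have "[n' + int j * d' = b j] (mod int q)" using nd' True by metis
          moreover have "b j \<in> {0..<int q}" using bP True by auto
          ultimately have "b j = (n' + int j * d') mod int q"
            by (metis atLeastLessThan_iff cong_def mod_pos_pos_trivial)
          also have "\<dots> = (n' mod int q + int j * (d' mod int q)) mod int q"
          proof -
            have "[n' mod int q + int j * (d' mod int q) = n' + int j * d'] (mod int q)"
              by (intro cong_add cong_mult cong_refl) (simp_all add: cong_def)
            then show ?thesis by (simp add: cong_def)
          qed
          finally show ?thesis unfolding g_def using True by simp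
        next
          case False
          then show ?thesis using bP unfolding g_def by (auto simp: PiE_def extensional_def)
        qed
      qed
      moreover have "(n' mod int q, d' mod int q) \<in> {0..<int q} \<times> {0..<int q}" using qpos by auto
      ultimately show "b \<in> g ` ({0..<int q} \<times> {0..<int q})" by blast
    qed
    show "g ` ({0..<int q} \<times> {0..<int q}) \<subseteq> Tset q a"
    proof
      fix b assume "b \<in> g ` ({0..<int q} \<times> {0..<int q})"
      then obtain n d where b: "b = g (n, d)" by auto
      have "\<forall>j<4. int (a j) dvd int a0 * n + int j * (int a0 * d) \<and>
              [(int a0 * n + int j * (int a0 * d)) div int (a j) = b j] (mod int q)"
      proof (intro allI impI conjI)
        fix j :: nat assume j: "j < 4"
        have e: "int a0 * n + int j * (int a0 * d) = int a0 * (n + int j * d)" by (simp add: algebra_simps)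
        show "int (a j) dvd int a0 * n + int j * (int a0 * d)" using a j e by simp
        show "[(int a0 * n + int j * (int a0 * d)) div int (a j) = b j] (mod int q)"
          using a j e b unfolding g_def by (simp add: cong_def)
      qed
      moreover have "b \<in> {0..<4::nat} \<rightarrow>\<^sub>E {0..<int q}" using b qpos unfolding g_def by auto
      ultimately show "b \<in> Tset q a" unfolding Tset_def by blast
    qed
  qed
  have inj: "inj_on g ({0..<int q} \<times> {0..<int q})"
  proof (rule inj_onI, clarify)
    fix n d n' d' assume r: "n \<in> {0..<int q}" "d \<in> {0..<int q}" "n' \<in> {0..<int q}" "d' \<in> {0..<int q}"
      and eq: "g (n, d) = g (n', d')"
    have "g (n, d) 0 = g (n', d') 0" using eq by simp
    then have "n mod int q = n' mod int q" unfolding g_def by simp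
    then have nn: "n = n'" using r by simp
    have "g (n, d) 1 = g (n', d') 1" using eq by simp
    then have "(n + d) mod int q = (n + d') mod int q" unfolding g_def using nn by simp
    then have "[d = d'] (mod int q)" unfolding cong_def by (metis mod_add_left_eq add.commute cong_add_lcancel cong_def)
    then have "d = d'" using r by (simp add: cong_def)
    then show "n = n' \<and> d = d'" using nn by simp
  qed
  have "Xi \<chi> q a = (\<Sum>z\<in>{0..<int q} \<times> {0..<int q}. \<Prod>j<4. \<chi> (g z j))"
    unfolding Xi_T T using sum.reindex[OF inj] by simp
  also have "\<dots> = (\<Sum>z\<in>{0..<int q} \<times> {0..<int q}. \<Prod>j<4. \<chi> (fst z + int j * snd z))"
  proof (rule sum.cong[OF refl], rule prod.cong[OF refl])
    fix z j assume "j \<in> {..<4::nat}"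
    then show "\<chi> (g z j) = \<chi> (fst z + int j * snd z)" unfolding g_def
      using chi_mod[OF dc] by (auto simp: split_beta)
  qed
  also have "\<dots> = (\<Sum>n\<in>{0..<int q}. \<Sum>d\<in>{0..<int q}. \<Prod>j<4. \<chi> (n + int j * d))"
    by (simp add: sum.cartesian_product split_beta)
  finally show ?thesis .
qed

lemma prod4: "(\<Prod>j<4::nat. f j) = f 0 * f 1 * f 2 * (f 3 :: 'a::comm_monoid_mult)"
  by (simp add: eval_nat_numeral lessThan_Suc mult_ac)

lemma totatives_int:
  assumes "q > 1"
  shows "card {n \<in> {0..<int q}. coprime n (int q)} = totient q"
proof -
  have "{n \<in> {0..<int q}. coprime n (int q)} = int ` totatives q"
  proof
    show "{n \<in> {0..<int q}. coprime n (int q)} \<subseteq> int ` totatives q"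
    proof
      fix n assume n: "n \<in> {n \<in> {0..<int q}. coprime n (int q)}"
      then have n0: "0 \<le> n" "n < int q" "coprime n (int q)" by auto
      have "n \<noteq> 0" using n0 assms by auto
      have "coprime (int (nat n)) (int q)" using n0 by simp
      then have "coprime (nat n) q" by (simp only: coprime_int_iff)
      then have "nat n \<in> totatives q" using n0 \<open>n \<noteq> 0\<close> by (auto simp: totatives_def)
      moreover have "n = int (nat n)" using n0 by simp
      ultimately show "n \<in> int ` totatives q" by (rule rev_image_eqI)
    qed
    show "int ` totatives q \<subseteq> {n \<in> {0..<int q}. coprime n (int q)}"
    proof
      fix n assume "n \<in> int ` totatives q"
      then obtain k where k: "n = int k" "k \<in> totatives q" by auto
      have "k \<noteq> q" using k assms by (auto simp: totatives_def)
      then show "n \<in> {n \<in> {0..<int q}. coprime n (int q)}" using k by (auto simp: totatives_def)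
    qed
  qed
  then show ?thesis by (simp add: card_image totient_def)
qed

context
  fixes q :: nat and \<chi> :: "int \<Rightarrow> complex"
  assumes prim: "primitive_character q \<chi>" and re: "real_character \<chi>"
    and sqf: "\<forall>p. prime p \<longrightarrow> \<not> p^2 dvd q" and oddq: "odd q"
begin

lemma dc': "dirichlet_character q \<chi>" using prim unfolding primitive_character_def by blast

lemma chi_sq: assumes "coprime n (int q)" shows "\<chi> n ^ 2 = 1"
proof -
  have "\<chi> n ^ 2 = (\<Prod>p\<in>prime_factors q. (of_int (Legendre n (int p)) :: complex) ^ 2)"
    using chi_decomp[OF prim re sqf oddq, of n] by (simp add: prod_power_distrib)
  also have "\<dots> = (\<Prod>p\<in>prime_factors q. 1)"
  proof (rule prod.cong[OF refl])
    fix p assume p: "p \<in> prime_factors q"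
    have "\<not> int p dvd n"
    proof
      assume "int p dvd n"
      moreover have "int p dvd int q" using p by auto
      ultimately have "int p dvd 1" using assms by (metis coprime_common_divisor)
      moreover have "prime p" using p by auto
      ultimately show False by (metis of_nat_1 int_dvd_int_iff nat_dvd_1_iff_1 not_prime_1)
    qed
    then have "Legendre n (int p) \<in> {1, -1}" unfolding Legendre_def by (auto simp: cong_0_iff)
    then show "(of_int (Legendre n (int p)) :: complex) ^ 2 = 1" by auto
  qed
  finally show ?thesis by simp
qed

lemma inner_sum:
  assumes "coprime n (int q)"
  shows "(\<Sum>d\<in>{0..<int q}. \<Prod>j<4. \<chi> (n + int j * d)) = (\<Sum>t\<in>{0..<int q}. \<Prod>j<4. \<chi> (1 + int j * t))"
proof -
  have qpos: "q > 0" using chi_pos[OF dc'] .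
  define h where "h d = (\<Prod>j<4. \<chi> (n + int j * d))" for d
  have hper: "h (x mod int q) = h x" for x
  proof -
    have "\<chi> (n + int j * (x mod int q)) = \<chi> (n + int j * x)" for j
      by (rule chi_cong[OF dc']) (intro cong_add cong_mult cong_refl, simp add: cong_def)
    then show ?thesis unfolding h_def by simp
  qed
  have "(\<Sum>d\<in>{0..<int q}. h d) = (\<Sum>t\<in>{0..<int q}. h (0 + n * t))"
    by (rule sum_affine_perm[symmetric]) (use qpos hper assms in auto)
  also have "\<dots> = (\<Sum>t\<in>{0..<int q}. \<Prod>j<4. \<chi> (1 + int j * t))"
  proof (rule sum.cong[OF refl])
    fix t
    have "h (0 + n*t) = (\<Prod>j<4. \<chi> n * \<chi> (1 + int j * t))"
      unfolding h_def by (rule prod.cong[OF refl]) (simp add: chi_mult[OF dc', symmetric] algebra_simps)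
    also have "\<dots> = \<chi> n ^ 4 * (\<Prod>j<4. \<chi> (1 + int j * t))" by (simp add: prod.distrib)
    also have "\<chi> n ^ 4 = 1" using chi_sq[OF assms] by (metis power_mult numeral_Bit0 one_power2 mult_2_right power2_eq_square num_double)
    finally show "h (0 + n*t) = (\<Prod>j<4. \<chi> (1 + int j * t))" by simp
  qed
  finally show ?thesis unfolding h_def .
qed

lemma G_eval:
  assumes "q > 1"
  shows "(\<Sum>n\<in>{0..<int q}. \<Sum>d\<in>{0..<int q}. \<Prod>j<4. \<chi> (n + int j * d))
       = of_nat (totient q) * (\<Sum>t\<in>{0..<int q}. \<chi> ((1+t)*(1+2*t)*(1+3*t)))"
proof -
  define F1 where "F1 = (\<Sum>t\<in>{0..<int q}. \<Prod>j<4. \<chi> (1 + int j * t))"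
  have "(\<Sum>n\<in>{0..<int q}. \<Sum>d\<in>{0..<int q}. \<Prod>j<4. \<chi> (n + int j * d))
      = (\<Sum>n\<in>{0..<int q}. if coprime n (int q) then F1 else 0)"
  proof (rule sum.cong[OF refl])
    fix n
    show "(\<Sum>d\<in>{0..<int q}. \<Prod>j<4. \<chi> (n + int j * d)) = (if coprime n (int q) then F1 else 0)"
    proof (cases "coprime n (int q)")
      case True
      have "(\<Sum>d\<in>{0..<int q}. \<Prod>j<4. \<chi> (n + int j * d)) = F1"
        unfolding F1_def by (rule inner_sum[OF True])
      then show ?thesis using True by simp
    next
      case False
      then have "\<chi> n = 0" using chi_zero_iff[OF dc'] by blast
      then show ?thesis using False by (simp add: prod4)
    qed
  qed
  also have "\<dots> = (\<Sum>n\<in>{n\<in>{0..<int q}. coprime n (int q)}. F1)"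
    by (rule sum.inter_filter[symmetric]) simp
  also have "\<dots> = of_nat (totient q) * F1" using totatives_int[OF assms] by simp
  also have "F1 = (\<Sum>t\<in>{0..<int q}. \<chi> ((1+t)*(1+2*t)*(1+3*t)))"
    unfolding F1_def by (rule sum.cong[OF refl]) (simp add: prod4 chi_mult[OF dc'] chi_one[OF dc'] mult_ac)
  finally show ?thesis .
qed

end

context
  fixes q :: nat and \<chi> :: "int \<Rightarrow> complex"
  assumes prim: "primitive_character q \<chi>" and re: "real_character \<chi>"
    and sqf: "\<forall>p. prime p \<longrightarrow> \<not> p^2 dvd q" and oddq: "odd q" and c3: "coprime q 3"
begin

lemma pf_gt3: assumes "p \<in> prime_factors q" shows "3 < p"
proof -
  have pp: "prime p" "p dvd q" using assms by auto
  have "p \<noteq> 2" using pp oddq by auto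
  moreover have "p \<noteq> 3"
  proof
    assume "p = 3"
    then have "3 dvd gcd q 3" using pp by simp
    then show False using c3 by simp
  qed
  moreover have "p \<ge> 2" using pp prime_ge_2_nat by blast
  ultimately show ?thesis by linarith
qed

lemma F1_eval:
  assumes b: "[2 * b = 1] (mod int q)"
  shows "(\<Sum>t\<in>{0..<int q}. \<chi> ((1+t)*(1+2*t)*(1+3*t)))
       = (\<Prod>p\<in>prime_factors q. of_int (int (num_points_E p (3*b^2)) - int p - 1))"
proof -
  have dc: "dirichlet_character q \<chi>" using prim unfolding primitive_character_def by blast
  have qpos: "q > 0" using chi_pos[OF dc] .
  define g where "g p t = (of_int (Legendre ((1+t)*(1+2*t)*(1+3*t)) (int p)) :: complex)" for p :: nat and t
  have "(\<Sum>t\<in>{0..<int q}. \<chi> ((1+t)*(1+2*t)*(1+3*t))) = (\<Sum>t\<in>{0..<int (\<Prod>(prime_factors q))}. \<Prod>p\<in>prime_factors q. g p t)"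
    using chi_decomp[OF prim re sqf oddq] sqfree_prod[OF qpos sqf] unfolding g_def by simp
  also have "\<dots> = (\<Prod>p\<in>prime_factors q. \<Sum>t\<in>{0..<int p}. g p t)"
  proof (rule sum_prod_crt)
    show "g p (x mod int p) = g p x" if "p \<in> prime_factors q" for p x
    proof -
      have "[(1+x mod int p)*(1+2*(x mod int p))*(1+3*(x mod int p)) = (1+x)*(1+2*x)*(1+3*x)] (mod int p)"
        by (intro cong_add cong_mult cong_refl) (simp_all add: cong_def)
      then show ?thesis unfolding g_def using Legendre_cong by metis
    qed
  qed auto
  also have "\<dots> = (\<Prod>p\<in>prime_factors q. of_int (int (num_points_E p (3*b^2)) - int p - 1))"
  proof (rule prod.cong[OF refl])
    fix p assume p: "p \<in> prime_factors q"
    have pp: "prime p" "p dvd q" using p by auto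
    have p3: "3 < p" using pf_gt3[OF p] .
    have bp: "[2 * b = 1] (mod int p)" using b pp by (meson cong_dvd_modulus int_dvd_int_iff)
    have "(\<Sum>t\<in>{0..<int p}. g p t) = of_int (\<Sum>t\<in>{0..<int p}. Legendre ((1+t)*(1+2*t)*(1+3*t)) (int p))"
      unfolding g_def by simp
    also have "(\<Sum>t\<in>{0..<int p}. Legendre ((1+t)*(1+2*t)*(1+3*t)) (int p))
        = (\<Sum>x\<in>{0..<int p}. Legendre (x*(x-1)*(x-3*b^2)) (int p))"
      using elliptic_local[OF pp(1) p3 bp] .
    also have "\<dots> = int (num_points_E p (3*b^2)) - int p - 1"
      using num_points_formula[of p "3*b^2"] pp p3 by simp
    finally show "(\<Sum>t\<in>{0..<int p}. g p t) = of_int (int (num_points_E p (3*b^2)) - int p - 1)" .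
  qed
  finally show ?thesis .
qed

end

lemma pow_dvd_aux:
  fixes y m :: nat
  assumes "y > 0" "m > 0" "\<forall>r. prime r \<longrightarrow> r dvd y \<longrightarrow> r dvd m"
  shows "y dvd m ^ y"
proof (rule multiplicity_le_imp_dvd)
  show "y \<noteq> 0" using assms by simp
  fix r :: nat assume r: "prime r"
  show "multiplicity r y \<le> multiplicity r (m ^ y)"
  proof (cases "r dvd y")
    case False
    then show ?thesis by (simp add: not_dvd_imp_multiplicity_0)
  next
    case True
    then have "r dvd m" using assms r by blast
    then have m1: "multiplicity r m \<ge> 1" using assms r
      using multiplicity_geI[of m r 1] prime_gt_1_nat[OF r] by auto
    have "multiplicity r (m ^ y) = y * multiplicity r m"
      using r assms by (simp add: prime_elem_multiplicity_power_distrib)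
    also have "\<dots> \<ge> y" using m1 by simp
    finally have A: "y \<le> multiplicity r (m ^ y)" .
    have "r ^ multiplicity r y dvd y" by (rule multiplicity_dvd)
    then have "r ^ multiplicity r y \<le> y" using assms by (simp add: dvd_imp_le)
    moreover have "multiplicity r y < r ^ multiplicity r y"
    proof -
      have "multiplicity r y < 2 ^ multiplicity r y" by (rule less_exp)
      also have "\<dots> \<le> r ^ multiplicity r y" using prime_ge_2_nat[OF r] by (intro power_mono) auto
      finally show ?thesis .
    qed
    ultimately show ?thesis using A by linarith
  qed
qed

lemma C1_zero:
  assumes dc: "dirichlet_character q \<chi>" and p: "prime p" "p dvd q" "3 < p"
    and apos: "\<forall>j<4. a j > 0"
    and ikl: "i < 4" "k < 4" "l < 4" "i \<noteq> k"
    and vi: "multiplicity p (a l) < multiplicity p (a i)"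
    and vk: "multiplicity p (a l) < multiplicity p (a k)"
  shows "Xi \<chi> q a = 0"
proof -
  define v where "v = multiplicity p (a l)"
  define P where "P = int p ^ Suc v"
  have pint: "prime (int p)" using p by simp
  have zero_l: "\<chi> (b l) = 0" if b: "b \<in> Tset q a" for b
  proof -
    obtain n d where nd: "\<forall>j<4. int (a j) dvd n + int j * d \<and>
                     [(n + int j * d) div int (a j) = b j] (mod int q)"
      using b unfolding Tset_def by blast
    have Pdvd: "P dvd n + int j * d" if "j < 4" "Suc v \<le> multiplicity p (a j)" for j
    proof -
      have "p ^ Suc v dvd a j" using that by (intro multiplicity_dvd')
      then have "P dvd int (a j)" unfolding P_def by (metis of_nat_dvd_iff of_nat_power)
      then show ?thesis using nd that(1) dvd_trans by blast
    qed
    have Pi: "P dvd n + int i * d" using Pdvd ikl vi unfolding v_def by simp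
    have Pk: "P dvd n + int k * d" using Pdvd ikl vk unfolding v_def by simp
    have "P dvd (n + int k * d) - (n + int i * d)" using Pi Pk by (rule dvd_diff[rotated])
    then have Pkid: "P dvd (int k - int i) * d" by (simp add: algebra_simps)
    have "\<not> int p dvd (int k - int i)"
    proof
      assume "int p dvd (int k - int i)"
      then have "int p dvd \<bar>int k - int i\<bar>" by simp
      moreover have "\<bar>int k - int i\<bar> > 0" using ikl by simp
      ultimately have "int p \<le> \<bar>int k - int i\<bar>" by (simp add: zdvd_imp_le)
      moreover have "\<bar>int k - int i\<bar> \<le> 3" using ikl by simp
      ultimately show False using p by simp
    qed
    then have "coprime (int p) (int k - int i)" using pint prime_imp_coprime by blast
    then have "coprime P (int k - int i)" unfolding P_def by simp
    then have Pd: "P dvd d" using Pkid by (metis coprime_dvd_mult_right_iff)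
    have "P dvd int i * d" using Pd by (rule dvd_mult)
    then have "P dvd (n + int i * d) - int i * d" using Pi by (intro dvd_diff)
    then have Pn: "P dvd n" by simp
    have Pl: "P dvd n + int l * d" using Pn Pd by simp
    have alnz: "a l \<noteq> 0" "\<not> is_unit p" using apos ikl p by auto
    obtain y where y: "a l = p ^ v * y" "\<not> p dvd y" unfolding v_def
      using multiplicity_decompose'[OF alnz] by blast
    have al: "int (a l) dvd n + int l * d" using nd ikl by blast
    define z where "z = (n + int l * d) div int (a l)"
    have nz: "n + int l * d = int (a l) * z" using al unfolding z_def by simp
    have "int p ^ v * int p dvd int p ^ v * (int y * z)"
      using Pl nz y(1) unfolding P_def by (simp add: mult_ac)
    then have "int p dvd int y * z" using p prime_gt_0_nat by (subst (asm) dvd_mult_cancel_left) auto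
    moreover have "\<not> int p dvd int y" using y(2) by simp
    ultimately have pz: "int p dvd z" using pint prime_dvd_mult_iff by blast
    have "[z = b l] (mod int q)" using nd ikl unfolding z_def by blast
    then have "[z = b l] (mod int p)" using p(2) by (meson cong_dvd_modulus int_dvd_int_iff)
    then have "int p dvd b l" using pz cong_dvd_iff by blast
    moreover have "int p dvd int q" using p by simp
    ultimately have "\<not> coprime (b l) (int q)" using pint
      by (metis coprime_common_divisor not_prime_unit)
    then show ?thesis using chi_zero_iff[OF dc] by blast
  qed
  have "Xi \<chi> q a = (\<Sum>b\<in>Tset q a. \<Prod>j<4. \<chi> (b j))" by (rule Xi_T)
  also have "\<dots> = 0"
  proof (rule sum.neutral, rule ballI)
    fix b assume "b \<in> Tset q a"
    then show "(\<Prod>j<4. \<chi> (b j)) = 0" using zero_l ikl by (intro prod_zero) auto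
  qed
  finally show ?thesis .
qed

lemma dvd_rad:
  assumes "prime r" "r dvd x" "x > 0"
  shows "r dvd rad x"
proof -
  have "r \<in> prime_factors x" using assms by (auto simp: in_prime_factors_iff)
  then show ?thesis unfolding rad_def using dvd_prodI[of "prime_factors x" r "\<lambda>x. x"] by simp
qed

lemma line_sum_zero_gen:
  assumes prim: "primitive_character q \<chi>" and p: "prime p" and qpm: "q = p * m"
    and cK: "coprime (int K) (int p)"
  shows "(\<Sum>k\<in>{0..<int p}. \<chi> (c + k * int (m * K))) = 0"
proof -
  have dc: "dirichlet_character q \<chi>" using prim unfolding primitive_character_def by blast
  define h where "h x = \<chi> (c + x * int m)" for x
  have hper: "h (x mod int p) = h x" for x
  proof -
    have "[c + (x mod int p) * int m = c + x * int m] (mod int q)"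
    proof -
      have "(x mod int p) * int m = (x * int m) mod (int p * int m)" by (simp add: mod_mult_mult2)
      then have "[(x mod int p) * int m = x * int m] (mod int p * int m)" by (simp add: cong_def)
      then show ?thesis using qpm by (simp add: cong_add_lcancel)
    qed
    then show ?thesis unfolding h_def using chi_cong[OF dc] by blast
  qed
  have "(\<Sum>k\<in>{0..<int p}. \<chi> (c + k * int (m * K))) = (\<Sum>k\<in>{0..<int p}. h (0 + int K * k))"
    unfolding h_def by (simp add: mult_ac)
  also have "\<dots> = (\<Sum>k\<in>{0..<int p}. h k)"
    by (rule sum_affine_perm) (use p prime_gt_0_nat hper cK in auto)
  also have "\<dots> = 0" unfolding h_def by (rule line_sum_zero[OF prim p qpm])
  finally show ?thesis .
qed

lemma C2_zero:
  assumes prim: "primitive_character q \<chi>" and p: "prime p" "p dvd q" and cpm: "coprime p (q div p)"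
    and arad: "\<forall>i<4. a i > 0 \<and> rad (a i) dvd q"
    and j: "j < 4" and vj: "\<forall>i<4. i \<noteq> j \<longrightarrow> multiplicity p (a i) < multiplicity p (a j)"
  shows "Xi \<chi> q a = 0"
proof -
  have dc: "dirichlet_character q \<chi>" using prim unfolding primitive_character_def by blast
  have qpos: "q > 0" using chi_pos[OF dc] .
  define m where "m = q div p"
  have qpm: "q = p * m" unfolding m_def using p by simp
  have mpos: "m > 0" using qpos qpm by (cases m) auto
  define S where "S = (\<Sum>i<4. a i)"
  define K where "K = m ^ S"
  define v where "v i = multiplicity p (a i)" for i
  define y where "y i = a i div p ^ v i" for i
  have ay: "a i = p ^ v i * y i" for i unfolding y_def v_def by (simp add: multiplicity_dvd)
  have ny: "\<not> p dvd y i" if "i < 4" for i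
  proof -
    have "a i \<noteq> 0" "\<not> is_unit p" using arad that p by auto
    then show ?thesis unfolding y_def v_def by (rule multiplicity_decompose)
  qed
  have yK: "y i dvd K" if i: "i < 4" for i
  proof -
    have apos: "a i > 0" using arad i by blast
    have ypos: "y i > 0" using ay[of i] apos by (cases "y i") auto
    have "\<forall>r. prime r \<longrightarrow> r dvd y i \<longrightarrow> r dvd m"
    proof (intro allI impI)
      fix r assume r: "prime r" "r dvd y i"
      then have "r dvd a i" using ay[of i] by simp
      then have "r dvd rad (a i)" using dvd_rad r apos by blast
      then have "r dvd q" using arad i dvd_trans by blast
      then have "r dvd p * m" using qpm by simp
      moreover have "r \<noteq> p" using r ny[OF i] by blast
      then have "\<not> r dvd p" using r p primes_dvd_imp_eq by blast
      ultimately show "r dvd m" using r prime_dvd_mult_iff by blast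
    qed
    then have "y i dvd m ^ y i" using pow_dvd_aux ypos mpos by blast
    moreover have "y i \<le> S"
    proof -
      have "y i \<le> a i" using ay[of i] apos by (metis dvd_imp_le dvd_triv_right)
      also have "a i \<le> S" unfolding S_def using i by (intro member_le_sum) auto
      finally show ?thesis .
    qed
    then have "m ^ y i dvd m ^ S" by (rule le_imp_power_dvd)
    ultimately show ?thesis unfolding K_def by (rule dvd_trans)
  qed
  define N where "N = a j * (m * K)"
  have Ndiv: "\<exists>w. N = a i * q * w" if i: "i < 4" "i \<noteq> j" for i
  proof -
    have "p ^ Suc (v i) dvd p ^ v j" using vj i unfolding v_def by (intro le_imp_power_dvd) auto
    moreover have "y i * m dvd y j * (m * K)"
    proof -
      have "y i dvd K * y j" using yK[OF i(1)] by (rule dvd_mult2)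
      then have "m * y i dvd m * (K * y j)" by (rule mult_dvd_mono[OF dvd_refl])
      then show ?thesis by (simp add: mult_ac)
    qed
    ultimately have "p ^ Suc (v i) * (y i * m) dvd p ^ v j * (y j * (m * K))" by (rule mult_dvd_mono)
    moreover have "p ^ Suc (v i) * (y i * m) = a i * q" using ay[of i] qpm by (simp add: mult_ac)
    moreover have "p ^ v j * (y j * (m * K)) = N" unfolding N_def using ay[of j] by (simp add: mult_ac)
    ultimately show ?thesis by (auto elim: dvdE)
  qed
  define s where "s = int (m * K)"
  have cK: "coprime (int K) (int p)"
  proof -
    have "coprime m p" using cpm unfolding m_def by (simp add: coprime_commute)
    then have "coprime K p" unfolding K_def by simp
    then show ?thesis by (metis coprime_int_iff)
  qed
  define T where "T = Tset q a"
  define \<tau> where "\<tau> k b = b(j := (b j + k * s) mod int q)" for k :: int and b :: "nat \<Rightarrow> int"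
  have tauT: "\<tau> k b \<in> T" if b: "b \<in> T" for k b
  proof -
    obtain n d where nd: "\<forall>i<4. int (a i) dvd n + int i * d \<and>
                     [(n + int i * d) div int (a i) = b i] (mod int q)"
      and bP: "b \<in> {0..<4::nat} \<rightarrow>\<^sub>E {0..<int q}" using b unfolding T_def Tset_def by blast
    have "\<forall>i<4. int (a i) dvd (n + k * int N) + int i * d \<and>
              [((n + k * int N) + int i * d) div int (a i) = \<tau> k b i] (mod int q)"
    proof (intro allI impI)
      fix i :: nat assume i: "i < 4"
      have apos: "a i > 0" using arad i by blast
      obtain z where z: "n + int i * d = int (a i) * z" using nd i by (meson dvdE)
      have zb: "[z = b i] (mod int q)" using nd i z apos by (metis nonzero_mult_div_cancel_left of_nat_0_less_iff less_irrefl)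
      show "int (a i) dvd (n + k * int N) + int i * d \<and>
              [((n + k * int N) + int i * d) div int (a i) = \<tau> k b i] (mod int q)"
      proof (cases "i = j")
        case True
        have e: "(n + k * int N) + int i * d = int (a i) * (z + k * s)"
          using z True unfolding N_def s_def by (simp add: algebra_simps)
        have zbj: "[z = b j] (mod int q)" using zb True by simp
        have "[z + k * s = b j + k * s] (mod int q)" using zbj by (intro cong_add cong_refl)
        then have "[z + k * s = \<tau> k b i] (mod int q)" unfolding \<tau>_def using True
          by (simp add: cong_def)
        then show ?thesis using e apos by simp
      next
        case False
        obtain w where w: "N = a i * q * w" using Ndiv[OF i False] by blast
        have e: "(n + k * int N) + int i * d = int (a i) * (z + k * int q * int w)"
          using z w by (simp add: algebra_simps)
        have "[z + k * int q * int w = b i + 0] (mod int q)" using zb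
          by (intro cong_add) (auto simp: cong_0_iff)
        then have "[z + k * int q * int w = \<tau> k b i] (mod int q)" unfolding \<tau>_def using False by simp
        then show ?thesis using e apos by simp
      qed
    qed
    moreover have "\<tau> k b \<in> {0..<4::nat} \<rightarrow>\<^sub>E {0..<int q}" using bP j qpos unfolding \<tau>_def
      by (auto simp: PiE_def Pi_def extensional_def)
    ultimately show ?thesis unfolding T_def Tset_def by blast
  qed
  have tau_inj: "inj_on (\<tau> k) T" for k
  proof (rule inj_onI)
    fix b b' assume b: "b \<in> T" "b' \<in> T" and eq: "\<tau> k b = \<tau> k b'"
    have "(b j + k * s) mod int q = (b' j + k * s) mod int q" using fun_cong[OF eq, of j] unfolding \<tau>_def by simp
    then have "[b j + k * s = b' j + k * s] (mod int q)" unfolding cong_def .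
    then have "[b j = b' j] (mod int q)" by (simp add: cong_add_rcancel)
    moreover have "b j \<in> {0..<int q}" "b' j \<in> {0..<int q}" using b j unfolding T_def Tset_def by auto
    ultimately have "b j = b' j" by (auto simp: cong_def)
    moreover have "b i = b' i" if "i \<noteq> j" for i using fun_cong[OF eq, of i] that unfolding \<tau>_def by simp
    ultimately show "b = b'" by (intro ext) (case_tac "x = j", auto)
  qed
  have tau_img: "\<tau> k ` T = T" for k
  proof (rule card_subset_eq)
    show "finite T" unfolding T_def by (rule finite_T)
    show "\<tau> k ` T \<subseteq> T" using tauT by blast
    show "card (\<tau> k ` T) = card T" using tau_inj by (rule card_image)
  qed
  define \<Psi> where "\<Psi> b = (\<Prod>i<4. \<chi> (b i))" for b :: "nat \<Rightarrow> int"
  have shift: "(\<Sum>b\<in>T. \<Psi> b) = (\<Sum>b\<in>T. \<Psi> (\<tau> k b))" for k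
  proof -
    have "(\<Sum>b\<in>T. \<Psi> b) = (\<Sum>b\<in>\<tau> k ` T. \<Psi> b)" using tau_img by simp
    also have "\<dots> = (\<Sum>b\<in>T. \<Psi> (\<tau> k b))" using sum.reindex[OF tau_inj] by simp
    finally show ?thesis .
  qed
  have Xi_eq: "Xi \<chi> q a = (\<Sum>b\<in>T. \<Psi> b)" unfolding T_def \<Psi>_def by (rule Xi_T)
  have "of_int (int p) * Xi \<chi> q a = (\<Sum>k\<in>{0..<int p}. \<Sum>b\<in>T. \<Psi> (\<tau> k b))"
    using shift Xi_eq by simp
  also have "\<dots> = (\<Sum>b\<in>T. \<Sum>k\<in>{0..<int p}. \<Psi> (\<tau> k b))" by (rule sum.swap)
  also have "\<dots> = 0"
  proof (rule sum.neutral, rule ballI)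
    fix b assume b: "b \<in> T"
    have "\<Psi> (\<tau> k b) = \<chi> (b j + k * s) * (\<Prod>i\<in>{..<4} - {j}. \<chi> (b i))" for k
    proof -
      have "\<Psi> (\<tau> k b) = \<chi> (\<tau> k b j) * (\<Prod>i\<in>{..<4} - {j}. \<chi> (\<tau> k b i))"
        unfolding \<Psi>_def using j by (simp add: prod.remove)
      also have "(\<Prod>i\<in>{..<4} - {j}. \<chi> (\<tau> k b i)) = (\<Prod>i\<in>{..<4} - {j}. \<chi> (b i))"
        unfolding \<tau>_def by (rule prod.cong) auto
      also have "\<chi> (\<tau> k b j) = \<chi> (b j + k * s)" unfolding \<tau>_def using chi_mod[OF dc] by simp
      finally show ?thesis .
    qed
    then have "(\<Sum>k\<in>{0..<int p}. \<Psi> (\<tau> k b)) = (\<Sum>k\<in>{0..<int p}. \<chi> (b j + k * s)) * (\<Prod>i\<in>{..<4} - {j}. \<chi> (b i))"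
      by (simp add: sum_distrib_right)
    also have "(\<Sum>k\<in>{0..<int p}. \<chi> (b j + k * s)) = 0"
      unfolding s_def by (rule line_sum_zero_gen[OF prim p(1) qpm cK])
    finally show "(\<Sum>k\<in>{0..<int p}. \<Psi> (\<tau> k b)) = 0" by simp
  qed
  finally show ?thesis using p prime_gt_0_nat by simp
qed

theorem lemma6p1:
  fixes q :: nat and \<chi> :: "int \<Rightarrow> complex" and a :: "nat \<Rightarrow> nat"
  assumes "q \<ge> 5" and "coprime q 6"
    and "primitive_character q \<chi>" and "real_character \<chi>"
    and "\<forall>j<4. a j > 0 \<and> rad (a j) dvd q"
  shows "(\<not> (a 0 = a 1 \<and> a 1 = a 2 \<and> a 2 = a 3) \<longrightarrow> Xi \<chi> q a = 0) \<and>
         (a 0 = a 1 \<and> a 1 = a 2 \<and> a 2 = a 3 \<longrightarrow>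
            (\<forall>b::int. [2 * b = 1] (mod int q) \<longrightarrow>
               Xi \<chi> q a = of_int (moebius q) * of_nat (totient q) *
                 (\<Prod>p \<in> {p. prime p \<and> p dvd q \<and> \<not> p^2 dvd q}.
                    (of_int (int p + 1 - int (num_points_E p (3 * b^2))) :: complex))))"
proof -
  note prim = assms(3) and re = assms(4) and arad = assms(5)
  have dc: "dirichlet_character q \<chi>" using prim unfolding primitive_character_def by blast
  have oddq: "odd q"
  proof
    assume "even q"
    then have "2 dvd gcd q 6" by simp
    then show False using assms(2) by simp
  qed
  have c3: "coprime q 3"
  proof -
    have "gcd q 3 dvd 6" using gcd_dvd2[of q 3] by (rule dvd_trans) simp
    then have "gcd q 3 dvd gcd q 6" by (intro gcd_greatest) simp_all
    moreover have g6: "gcd q 6 = 1" using assms(2) by (simp only: coprime_iff_gcd_eq_1)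
    ultimately have "gcd q 3 dvd 1" by simp
    then have "gcd q 3 = 1" by simp
    then show ?thesis by (simp only: coprime_iff_gcd_eq_1)
  qed
  have sqf: "\<forall>p. prime p \<longrightarrow> \<not> p^2 dvd q"
    using q_squarefree_aux[OF prim re oddq] by blast
  have qpos: "q > 0" using assms(1) by simp
  show ?thesis
  proof (intro conjI impI allI)
    assume neq: "\<not> (a 0 = a 1 \<and> a 1 = a 2 \<and> a 2 = a 3)"
    have E: "\<exists>i0 k0. i0 < (4::nat) \<and> k0 < 4 \<and> a i0 \<noteq> a k0"
    proof (rule ccontr)
      assume "\<not> (\<exists>i0 k0. i0 < (4::nat) \<and> k0 < 4 \<and> a i0 \<noteq> a k0)"
      then have all: "\<And>i0 k0. i0 < (4::nat) \<Longrightarrow> k0 < 4 \<Longrightarrow> a i0 = a k0" by blast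
      have "a 0 = a 1" by (rule all) simp_all
      moreover have "a 1 = a 2" by (rule all) simp_all
      moreover have "a 2 = a 3" by (rule all) simp_all
      ultimately show False using neq by blast
    qed
    then obtain i0 k0 where ik0: "i0 < 4" "k0 < 4" "a i0 \<noteq> a k0" by blast
    have pos0: "a i0 > 0" "a k0 > 0" using arad ik0 by auto
    obtain p where p: "prime p" "multiplicity p (a i0) \<noteq> multiplicity p (a k0)"
    proof (rule ccontr)
      assume "\<not> thesis"
      then have "\<And>p. prime p \<Longrightarrow> multiplicity p (a i0) = multiplicity p (a k0)" using that by blast
      then have "normalize (a i0) = normalize (a k0)" using pos0 by (intro multiplicity_eq_imp_eq) auto
      then show False using ik0 by simp
    qed
    define v where "v i = multiplicity p (a i)" for i
    have pq: "p dvd q"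
    proof -
      have "p dvd a i0 \<or> p dvd a k0"
        using p by (metis not_dvd_imp_multiplicity_0)
      then obtain i where i: "i < 4" "p dvd a i" using ik0 by blast
      then have "p dvd rad (a i)" using dvd_rad p arad by blast
      then show ?thesis using arad i dvd_trans by blast
    qed
    have pP: "p \<in> prime_factors q" using p pq qpos by (auto simp: in_prime_factors_iff)
    have p3: "3 < p" using pf_gt3[OF prim re sqf oddq c3 pP] .
    have cpm: "coprime p (q div p)" using cop_pm[OF prim re sqf oddq pP] .
    obtain j0 where j0: "j0 < 4" "\<forall>i<4. v i \<le> v j0"
    proof -
      define M where "M = Max (v ` {..<4})"
      have ne: "{..<4::nat} \<noteq> {}" by (simp add: lessThan_empty_iff)
      have "M \<in> v ` {..<4}" unfolding M_def using ne by (intro Max_in) auto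
      then obtain j0 where "j0 < 4" "v j0 = M" by auto
      moreover have "\<forall>i<4. v i \<le> M" unfolding M_def by (auto intro: Max_ge)
      ultimately show ?thesis using that by auto
    qed
    show "Xi \<chi> q a = 0"
    proof (cases "\<forall>i<4. i \<noteq> j0 \<longrightarrow> v i < v j0")
      case True
      show ?thesis by (rule C2_zero[OF prim p(1) pq cpm arad j0(1)]) (use True v_def in auto)
    next
      case False
      then obtain k where k: "k < 4" "k \<noteq> j0" "v k = v j0" using j0 by force
      obtain l where l: "l < 4" "v l < v j0"
      proof (cases "v i0 < v k0")
        case True then show ?thesis using that[of i0] ik0 j0 by force
      next
        case False
        then have "v k0 < v i0" using p(2) unfolding v_def by simp
        then show ?thesis using that[of k0] ik0 j0 by force
      qed
      show ?thesis
        by (rule C1_zero[OF dc p(1) pq p3, of a j0 k l]) (use arad j0 k l v_def in auto)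
    qed
  next
    fix b :: int
    assume eq: "a 0 = a 1 \<and> a 1 = a 2 \<and> a 2 = a 3" and b: "[2 * b = 1] (mod int q)"
    have aeq: "\<forall>j<4. a j = a 0" using eq by (auto simp: less_Suc_eq eval_nat_numeral)
    have q1: "q > 1" using assms(1) by simp
    define P where "P = prime_factors q"
    have "Xi \<chi> q a = (\<Sum>n\<in>{0..<int q}. \<Sum>d\<in>{0..<int q}. \<Prod>j<4. \<chi> (n + int j * d))"
      by (rule Xi_equal[OF dc aeq]) (use arad in auto)
    also have "\<dots> = of_nat (totient q) * (\<Sum>t\<in>{0..<int q}. \<chi> ((1+t)*(1+2*t)*(1+3*t)))"
      by (rule G_eval[OF prim re sqf oddq q1])
    also have "(\<Sum>t\<in>{0..<int q}. \<chi> ((1+t)*(1+2*t)*(1+3*t)))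
       = (\<Prod>p\<in>P. of_int (int (num_points_E p (3*b^2)) - int p - 1))"
      unfolding P_def by (rule F1_eval[OF prim re sqf oddq c3 b])
    also have "\<dots> = (\<Prod>p\<in>P. (-1) * (of_int (int p + 1 - int (num_points_E p (3 * b^2))) :: complex))"
      by (rule prod.cong[OF refl]) simp
    also have "\<dots> = (-1) ^ card P * (\<Prod>p\<in>P. (of_int (int p + 1 - int (num_points_E p (3 * b^2))) :: complex))"
      by (simp only: prod.distrib prod_constant)
    finally have X: "Xi \<chi> q a = of_nat (totient q) * ((-1) ^ card P * (\<Prod>p\<in>P. (of_int (int p + 1 - int (num_points_E p (3 * b^2))) :: complex)))" .
    have sq: "squarefree q" using squarefree_factorial_semiring[of q] qpos sqf by auto
    have mu: "moebius q = (-1) ^ card P" unfolding moebius_def P_def using sq qpos by simp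
    have Pset: "{p. prime p \<and> p dvd q \<and> \<not> p^2 dvd q} = P"
      unfolding P_def using sqf qpos by (auto simp: in_prime_factors_iff)
    show "Xi \<chi> q a = of_int (moebius q) * of_nat (totient q) *
                 (\<Prod>p \<in> {p. prime p \<and> p dvd q \<and> \<not> p^2 dvd q}.
                    (of_int (int p + 1 - int (num_points_E p (3 * b^2))) :: complex))"
      unfolding Pset X mu by (simp add: mult_ac)
  qed
qed

end
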